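(* Let $L$ be a finite field of characteristic $2$ and cardinality $q>2$ with $q\not\equiv 2,4 \pmod 5$. Let $f\colon L\to L$, $f(x)=x^s$, be a power permutation of $L$ (i.e. $\gcd(s,q-1)=1$). If $f$ is almost perfect nonlinear, then there exists $a\in L^{\times}$ such that $\widehat{f}(a)\equiv 0 \pmod 5$.
   Context: Let $\mu$ be the canonical additive character of $L$, $\mu(x)=\exp(2i\pi\,\mathrm{Tr}(x)/2)=(-1)^{\mathrm{Tr}(x)}$, where $\mathrm{Tr}$ is the absolute trace of $L/\mathbb{F}_2$. The Fourier coefficient of a map $f\colon L\to L$ at $a\in L$ is $\widehat{f}(a)=\sum_{x\in L}\mu(ax+f(x))$; here these are rational integers. A map $f\colon L\to L$ is almost perfect nonlinear (APN) if for every $u\in L^{\times}$ the map $x\mapsto f(x+u)+f(x)$ is two-to-one. *)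

theory Defs
  imports Main "HOL-Library.Cardinality"
begin

definition ext_degree :: "'a::{field,finite} itself \<Rightarrow> nat" where
  "ext_degree _ = (THE n. card (UNIV :: 'a set) = 2 ^ n)"

definition abs_trace :: "'a::{field,finite} \<Rightarrow> 'a" where
  "abs_trace x = (\<Sum>i<ext_degree TYPE('a). x ^ (2 ^ i))"

definition can_char :: "'a::{field,finite} \<Rightarrow> int" where
  "can_char x = (if abs_trace x = 0 then 1 else -1)"

definition fourier_coeff :: "('a::{field,finite} \<Rightarrow> 'a) \<Rightarrow> 'a \<Rightarrow> int" where
  "fourier_coeff f a = (\<Sum>x\<in>UNIV. can_char (a * x + f x))"

definition two_to_one :: "('a \<Rightarrow> 'b) \<Rightarrow> bool" where
  "two_to_one g \<longleftrightarrow> (\<forall>b. card {x. g x = b} = 0 \<or> card {x. g x = b} = 2)"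

definition APN :: "('a::{field,finite} \<Rightarrow> 'a) \<Rightarrow> bool" where
  "APN f \<longleftrightarrow> (\<forall>u. u \<noteq> 0 \<longrightarrow> two_to_one (\<lambda>x. f (x + u) + f x))"

end

theory Submission
  imports Defs "HOL-Computational_Algebra.Computational_Algebra"
begin


lemma char2_one: assumes "CHAR('a::{field,finite}) = 2" shows "(1::'a) + 1 = 0"
proof -
  have "(of_nat CHAR('a) :: 'a) = 0" by (rule of_nat_CHAR)
  then show ?thesis using assms by simp
qed

lemma char2_add_self: assumes "CHAR('a::{field,finite}) = 2" shows "(x::'a) + x = 0"
proof -
  have "x + x = (1+1)*x" by (simp add: distrib_right)
  then show ?thesis using char2_one[OF assms] by simp
qed

lemma char2_eq_iff: assumes "CHAR('a::{field,finite}) = 2" shows "((x::'a) + y = 0) = (x = y)"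
proof
  assume "x + y = 0" then have "x = -y" by (simp add: eq_neg_iff_add_eq_0)
  also have "-y = y" using char2_add_self[OF assms, of y] by (simp add: add_eq_0_iff)
  finally show "x = y" .
qed (simp add: char2_add_self[OF assms])

lemma field_power_card: "(x::'a::{field,finite}) ^ CARD('a) = x"
proof (cases "x = 0")
  case False
  have "x * (\<Prod>y\<in>UNIV-{0}. x * y) = x * x ^ (card (UNIV :: 'a set) - 1) * \<Prod>(UNIV-{0})"
    by (simp add: prod.distrib mult_ac)
  also have "x * x ^ (card (UNIV :: 'a set) - 1) = x ^ Suc (card (UNIV :: 'a set) - 1)"
    by (subst power_Suc) auto
  also have "Suc (card (UNIV :: 'a set) - 1) = card (UNIV :: 'a set)"
    using finite_UNIV_card_ge_0[where ?'a = 'a] by simp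
  also have "(\<Prod>y\<in>UNIV-{0}. x * y) = (\<Prod>y\<in>UNIV-{0}. y)"
    by (rule prod.reindex_bij_witness[of _ "\<lambda>y. y / x" "\<lambda>y. x * y"]) (use False in auto)
  finally show ?thesis
    by simp
qed (use finite_UNIV_card_ge_0[where ?'a = 'a] in auto)

lemma field_power_card1: "(x::'a::{field,finite}) \<noteq> 0 \<Longrightarrow> x ^ (CARD('a) - 1) = 1"
proof -
  assume x: "x \<noteq> 0"
  have e: "CARD('a) = Suc (CARD('a) - 1)" using finite_UNIV_card_ge_0[where ?'a = 'a] by simp
  have "x * x ^ (CARD('a) - 1) = x ^ CARD('a)" by (metis e power_Suc)
  then have "x * x ^ (CARD('a) - 1) = x * 1" using field_power_card[of x] by simp
  then show ?thesis using x by simp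
qed

lemma card_pow2_aux:
  assumes "CHAR('a::{field,finite}) = 2"
  shows "\<And>S::'a set. card (UNIV - S) = m \<Longrightarrow> 0 \<in> S \<Longrightarrow> (\<forall>x\<in>S. \<forall>y\<in>S. x + y \<in> S) \<Longrightarrow> \<exists>k. CARD('a) = 2^k * card S"
proof (induction m rule: less_induct)
  case (less m S)
  show ?case
  proof (cases "S = UNIV")
    case True then show ?thesis by (intro exI[of _ 0]) simp
  next
    case False
    then obtain a where a: "a \<notin> S" by auto
    define S' where "S' = S \<union> (\<lambda>x. x + a) ` S"
    have disj: "S \<inter> (\<lambda>x. x + a) ` S = {}"
    proof (rule ccontr)
      assume "S \<inter> (\<lambda>x. x + a) ` S \<noteq> {}"
      then obtain x where x: "x \<in> S" "x + a \<in> S" by auto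
      then have "x + (x + a) \<in> S" using less.prems(3) by blast
      also have "x + (x + a) = a" using char2_add_self[OF assms, of x] by (simp add: add.assoc[symmetric])
      finally show False using a by simp
    qed
    have cS': "card S' = 2 * card S"
    proof -
      have "card ((\<lambda>x. x + a) ` S) = card S" by (rule card_image) (auto simp: inj_on_def)
      then show ?thesis unfolding S'_def using disj by (simp add: card_Un_disjoint)
    qed
    have z: "0 \<in> S'" using less.prems(2) unfolding S'_def by auto
    have cl: "\<forall>x\<in>S'. \<forall>y\<in>S'. x + y \<in> S'"
    proof (intro ballI)
      fix x y assume "x \<in> S'" "y \<in> S'"
      then consider "x \<in> S" "y \<in> S" | x' where "x' \<in> S" "x = x' + a" "y \<in> S"
        | y' where "x \<in> S" "y' \<in> S" "y = y' + a"
        | x' y' where "x' \<in> S" "x = x' + a" "y' \<in> S" "y = y' + a"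
        unfolding S'_def by auto
      then show "x + y \<in> S'"
      proof cases
        case 1 then show ?thesis using less.prems(3) unfolding S'_def by auto
      next
        case 2 then have "x' + y \<in> S" using less.prems(3) by auto
        then show ?thesis using 2 unfolding S'_def by (auto simp: algebra_simps)
      next
        case 3 then have "x + y' \<in> S" using less.prems(3) by auto
        then show ?thesis using 3 unfolding S'_def by (auto simp: algebra_simps)
      next
        case 4 then have "x' + y' \<in> S" using less.prems(3) by auto
        moreover have "x + y = x' + y' + (a + a)" using 4 by (simp add: algebra_simps)
        ultimately show ?thesis using char2_add_self[OF assms, of a] unfolding S'_def by auto
      qed
    qed
    have "a \<in> S'" using less.prems(2) unfolding S'_def by (auto intro: image_eqI[of _ _ 0])
    then have "UNIV - S' \<subset> UNIV - S" using a unfolding S'_def by blast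
    then have "card (UNIV - S') < m"
      using less.prems(1) psubset_card_mono[of "UNIV - S" "UNIV - S'"] by simp
    then obtain k where "CARD('a) = 2^k * card S'" using less.IH[OF _ refl z cl] by blast
    then show ?thesis using cS' by (intro exI[of _ "Suc k"]) simp
  qed
qed

lemma card_pow2: assumes "CHAR('a::{field,finite}) = 2" shows "CARD('a) = 2 ^ ext_degree TYPE('a)"
proof -
  obtain k where k: "CARD('a) = 2^k" using card_pow2_aux[OF assms refl, of "{0}"] by auto
  have "ext_degree TYPE('a) = k" unfolding ext_degree_def
    by (rule the_equality) (use k in \<open>auto simp: power_inject_exp\<close>)
  then show ?thesis using k by simp
qed



lemma trace_add: assumes "CHAR('a::{field,finite}) = 2"
  shows "abs_trace ((x::'a) + y) = abs_trace x + abs_trace y"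
proof -
  have "(x + y) ^ (2^i) = x ^ (2^i) + y ^ (2^i)" for i
    by (rule freshmans_dream') (use assms in auto)
  then show ?thesis unfolding abs_trace_def by (simp add: sum.distrib)
qed

lemma trace_sq: assumes "CHAR('a::{field,finite}) = 2"
  shows "abs_trace (x::'a) ^ 2 = abs_trace x"
proof -
  define n where "n = ext_degree TYPE('a)"
  have xn: "x ^ (2^n) = x" using field_power_card[of x] card_pow2[OF assms] unfolding n_def by simp
  have "abs_trace x ^ 2 = (\<Sum>i<n. (x ^ (2^i)) ^ 2)"
    unfolding abs_trace_def n_def by (rule freshmans_dream_sum) (use assms in auto)
  also have "\<dots> = (\<Sum>i<n. x ^ (2^Suc i))" by (simp add: power_mult[symmetric] mult.commute)
  also have "\<dots> = (\<Sum>i<Suc n. x ^ (2^i)) - x" by (subst sum.lessThan_Suc_shift) simp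
  also have "\<dots> = (\<Sum>i<n. x ^ (2^i))" using xn by simp
  finally show ?thesis unfolding abs_trace_def n_def .
qed

lemma trace_01: assumes "CHAR('a::{field,finite}) = 2"
  shows "abs_trace (x::'a) = 0 \<or> abs_trace x = 1"
proof -
  have "abs_trace x * (abs_trace x - 1) = 0" using trace_sq[OF assms, of x]
    by (simp add: algebra_simps power2_eq_square)
  then show ?thesis by auto
qed

lemma chi_add: assumes "CHAR('a::{field,finite}) = 2"
  shows "can_char ((x::'a) + y) = can_char x * can_char y"
  using trace_01[OF assms, of x] trace_01[OF assms, of y] trace_add[OF assms, of x y] char2_one[OF assms]
  unfolding can_char_def by auto

lemma chi_0: "can_char (0::'a::{field,finite}) = 1"
  unfolding can_char_def abs_trace_def by (simp add: power_0_left)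

lemma trace_nonzero: assumes "CHAR('a::{field,finite}) = 2" and "CARD('a) > 2"
  shows "\<exists>x::'a. abs_trace x \<noteq> 0"
proof -
  define n where "n = ext_degree TYPE('a)"
  have q: "CARD('a) = 2^n" using card_pow2[OF assms(1)] unfolding n_def .
  have n1: "n \<ge> 1" using q assms(2) by (cases n) auto
  define P :: "'a poly" where "P = (\<Sum>i<n. monom 1 (2^i))"
  have cP: "coeff P j = (\<Sum>i<n. if 2^i = j then 1 else 0)" for j
    unfolding P_def by (simp add: coeff_sum coeff_monom)
  have "coeff P (2^(n-1)) = (\<Sum>i<n. if i = n-1 then 1 else 0)"
    unfolding cP by (intro sum.cong refl) (simp add: power_inject_exp)
  also have "\<dots> = 1" using n1 by simp
  finally have "P \<noteq> 0" by auto
  have "degree P \<le> 2^(n-1)"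
  proof (rule degree_le, intro allI impI)
    fix j :: nat assume j: "2^(n-1) < j"
    have "2^i \<noteq> j" if "i < n" for i
    proof -
      have "(2::nat)^i \<le> 2^(n-1)" using that by (intro power_increasing) auto
      then show ?thesis using j by auto
    qed
    then show "coeff P j = 0" unfolding cP by (intro sum.neutral) auto
  qed
  have evalP: "poly P x = abs_trace x" for x
    unfolding P_def abs_trace_def n_def by (simp add: poly_sum poly_monom)
  have "card {x. poly P x = 0} \<le> 2^(n-1)"
    using card_poly_roots_bound[OF \<open>P \<noteq> 0\<close>] \<open>degree P \<le> _\<close> by linarith
  also have "\<dots> < 2^n" using n1 by (intro power_strict_increasing) auto
  finally have "{x. poly P x = 0} \<noteq> UNIV" using q by auto
  then show ?thesis using evalP by auto
qed

lemma chi_sum0: assumes "CHAR('a::{field,finite}) = 2" and "CARD('a) > 2"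
  shows "(\<Sum>x::'a\<in>UNIV. can_char x) = 0"
proof -
  obtain b :: 'a where b: "abs_trace b \<noteq> 0" using trace_nonzero[OF assms] by blast
  then have cb: "can_char b = -1" unfolding can_char_def by simp
  have "(\<Sum>x::'a\<in>UNIV. can_char x) = (\<Sum>x::'a\<in>UNIV. can_char (x + b))"
    by (rule sum.reindex_bij_witness[of _ "\<lambda>y. y + b" "\<lambda>y. y + b"])
       (auto simp: add.assoc char2_add_self[OF assms(1)])
  also have "\<dots> = - (\<Sum>x::'a\<in>UNIV. can_char x)"
    by (simp add: chi_add[OF assms(1)] cb sum_negf)
  finally show ?thesis by simp
qed

lemma chi_sum: assumes "CHAR('a::{field,finite}) = 2" and "CARD('a) > 2"
  shows "(\<Sum>a::'a\<in>UNIV. can_char (a * y)) = (if y = 0 then int CARD('a) else 0)"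
proof (cases "y = 0")
  case True then show ?thesis by (simp add: chi_0)
next
  case False
  have "(\<Sum>a::'a\<in>UNIV. can_char (a * y)) = (\<Sum>x::'a\<in>UNIV. can_char x)"
    by (rule sum.reindex_bij_witness[of _ "\<lambda>x. x / y" "\<lambda>a. a * y"]) (use False in auto)
  then show ?thesis using chi_sum0[OF assms] False by simp
qed



lemma pow_bij: assumes "CARD('a::{field,finite}) > 2" and "coprime s (CARD('a) - 1)"
  shows "bij (\<lambda>x::'a. x ^ s) \<and> s > 0"
proof -
  define m where "m = CARD('a) - 1"
  have m2: "m \<ge> 2" using assms(1) unfolding m_def by simp
  have s0: "s \<noteq> 0"
  proof
    assume "s = 0"
    then have "m = 1" using assms(2) unfolding m_def by simp
    then show False using m2 by simp
  qed
  obtain t k where tk: "s * t = m * k + gcd s m" using bezout_nat[OF s0] by blast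
  have g: "gcd s m = 1" using assms(2) unfolding m_def by simp
  have st: "s * t = m * k + 1" using tk g by simp
  have inv: "(x ^ s) ^ t = x" for x :: 'a
  proof (cases "x = 0")
    case True
    have "t \<noteq> 0" using st by (cases t) auto
    then show ?thesis using s0 True by (simp add: power_0_left)
  next
    case False
    have "(x ^ s) ^ t = (x ^ m) ^ k * x" by (simp add: power_mult[symmetric] st power_add)
    also have "x ^ m = 1" using field_power_card1[OF False] unfolding m_def .
    finally show ?thesis by simp
  qed
  have "inj (\<lambda>x::'a. x ^ s)" by (rule inj_on_inverseI[of _ "\<lambda>y. y ^ t"]) (use inv in auto)
  then have "bij (\<lambda>x::'a. x ^ s)" using finite_UNIV_inj_surj[of "\<lambda>x::'a. x ^ s"] by (simp add: bij_def)
  then show ?thesis using s0 by simp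
qed

lemma fermat5: "\<not> (5::int) dvd w \<Longrightarrow> w ^ 4 mod 5 = 1"
proof -
  assume h: "\<not> (5::int) dvd w"
  define r where "r = w mod 5"
  have "r \<in> {1,2,3,4}" using h unfolding r_def by (auto simp: dvd_eq_mod_eq_0)
  moreover have "w ^ 4 mod 5 = r ^ 4 mod 5" unfolding r_def by (simp add: power_mod)
  ultimately show ?thesis by auto
qed

lemma final5: assumes "(5::int) dvd 2 * q^3 - q + 1" and "q mod 5 \<noteq> 2" and "q mod 5 \<noteq> 4"
  shows False
proof -
  define r where "r = q mod 5"
  define k where "k = q div 5"
  have q: "q = 5 * k + r" unfolding r_def k_def by simp
  have "2 * q^3 - q + 1 = 5 * (2*(25*k^3 + 15*k^2*r + 3*k*r^2) - k) + (2*r^3 - r + 1)"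
    unfolding q by (simp add: algebra_simps power2_eq_square power3_eq_cube)
  then have "5 dvd (2*r^3 - r + 1)" using assms(1) by (metis dvd_add_right_iff dvd_triv_left)
  moreover have "r \<in> {0,1,3}" using assms(2,3) unfolding r_def by auto
  ultimately show False by auto
qed



theorem mainTheorem1:
  fixes s :: nat
  assumes "CHAR('a::{field,finite}) = 2"
    and "CARD('a) > 2"
    and "CARD('a) mod 5 \<noteq> 2" and "CARD('a) mod 5 \<noteq> 4"
    and "coprime s (CARD('a) - 1)"
    and "APN (\<lambda>x::'a. x ^ s)"
  shows "\<exists>a::'a. a \<noteq> 0 \<and> (5::int) dvd fourier_coeff (\<lambda>x. x ^ s) a"
proof -
  note ch = assms(1)
  define f :: "'a \<Rightarrow> 'a" where "f = (\<lambda>x. x ^ s)"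
  define chi :: "'a \<Rightarrow> int" where "chi = can_char"
  define q where "q = int CARD('a)"
  define W where "W = (\<lambda>a. \<Sum>x\<in>UNIV. chi (a * x + f x))"
  define D where "D = (\<lambda>u x. f (x + u) + f x)"
  define Dl where "Dl = (\<lambda>b u. \<Sum>x\<in>UNIV. chi (b * D u x))"
  define G where "G = (\<lambda>b. \<Sum>u\<in>UNIV. (Dl b u)^2)"
  have chiadd: "chi (x + y) = chi x * chi y" for x y unfolding chi_def by (rule chi_add[OF ch])
  have chisum: "(\<Sum>a\<in>UNIV. chi (a * y)) = (if y = 0 then q else 0)" for y
    unfolding chi_def q_def by (rule chi_sum[OF ch assms(2)])
  have aa: "x + x = 0" for x :: 'a by (rule char2_add_self[OF ch])
  have bijf: "bij f" and s0: "s > 0" using pow_bij[OF assms(2) assms(5)] unfolding f_def by auto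
  have fmult: "f (c * x) = f c * f x" for c x unfolding f_def by (simp add: power_mult_distrib)

  have W2: "(W a)^2 = (\<Sum>u\<in>UNIV. chi (a * u) * Dl 1 u)" for a
  proof -
    have "(W a)^2 = (\<Sum>x\<in>UNIV. \<Sum>y\<in>UNIV. chi (a * x + f x) * chi (a * y + f y))"
      unfolding W_def power2_eq_square by (rule sum_product)
    also have "\<dots> = (\<Sum>x\<in>UNIV. \<Sum>u\<in>UNIV. chi (a * x + f x) * chi (a * (x + u) + f (x + u)))"
    proof (rule sum.cong[OF refl])
      fix x
      show "(\<Sum>y\<in>UNIV. chi (a * x + f x) * chi (a * y + f y)) =
            (\<Sum>u\<in>UNIV. chi (a * x + f x) * chi (a * (x + u) + f (x + u)))"
        by (rule sum.reindex_bij_witness[of _ "\<lambda>y. x + y" "\<lambda>y. x + y"])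
           (simp_all add: add.assoc[symmetric] aa)
    qed
    also have "\<dots> = (\<Sum>x\<in>UNIV. \<Sum>u\<in>UNIV. chi (a * u) * chi (1 * D u x))"
    proof (intro sum.cong refl)
      fix x u
      have e: "a * x + f x + (a * (x + u) + f (x + u)) = a * u + 1 * D u x + (a * x + a * x)"
        unfolding D_def by (simp add: algebra_simps)
      show "chi (a * x + f x) * chi (a * (x + u) + f (x + u)) = chi (a * u) * chi (1 * D u x)"
        by (simp only: chiadd[symmetric] e aa add_0_right)
    qed
    also have "\<dots> = (\<Sum>u\<in>UNIV. chi (a * u) * Dl 1 u)"
      unfolding Dl_def by (subst sum.swap) (simp add: sum_distrib_left)
    finally show ?thesis .
  qed

  have W4: "(\<Sum>a\<in>UNIV. (W a)^4) = q * G 1"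
  proof -
    have "(\<Sum>a\<in>UNIV. (W a)^4) = (\<Sum>a\<in>UNIV. \<Sum>u\<in>UNIV. \<Sum>v\<in>UNIV. chi (a * (u + v)) * (Dl 1 u * Dl 1 v))"
    proof (rule sum.cong[OF refl])
      fix a
      have "(W a)^4 = (W a)^2 * (W a)^2" by simp
      also have "\<dots> = (\<Sum>u\<in>UNIV. \<Sum>v\<in>UNIV. (chi (a * u) * Dl 1 u) * (chi (a * v) * Dl 1 v))"
        unfolding W2 by (rule sum_product)
      also have "\<dots> = (\<Sum>u\<in>UNIV. \<Sum>v\<in>UNIV. chi (a * (u + v)) * (Dl 1 u * Dl 1 v))"
        by (intro sum.cong refl) (simp add: distrib_left chiadd mult_ac)
      finally show "(W a)^4 = \<dots>" .
    qed
    also have "\<dots> = (\<Sum>u\<in>UNIV. \<Sum>a\<in>UNIV. \<Sum>v\<in>UNIV. chi (a * (u + v)) * (Dl 1 u * Dl 1 v))"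
      by (rule sum.swap)
    also have "\<dots> = (\<Sum>u\<in>UNIV. \<Sum>v\<in>UNIV. \<Sum>a\<in>UNIV. chi (a * (u + v)) * (Dl 1 u * Dl 1 v))"
      by (rule sum.cong[OF refl], rule sum.swap)
    also have "\<dots> = (\<Sum>u\<in>UNIV. \<Sum>v\<in>UNIV. (if v = u then q else 0) * (Dl 1 u * Dl 1 v))"
    proof (intro sum.cong refl)
      fix u v :: 'a
      have ceq: "(u + v = 0) = (v = u)" using char2_eq_iff[OF ch, of u v] by auto
      show "(\<Sum>a\<in>UNIV. chi (a * (u + v)) * (Dl 1 u * Dl 1 v)) = (if v = u then q else 0) * (Dl 1 u * Dl 1 v)"
        by (simp only: sum_distrib_right[symmetric] chisum ceq)
    qed
    also have "\<dots> = (\<Sum>u\<in>UNIV. q * (Dl 1 u)^2)"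
    proof (rule sum.cong[OF refl])
      fix u :: 'a
      show "(\<Sum>v\<in>UNIV. (if v = u then q else 0) * (Dl 1 u * Dl 1 v)) = q * (Dl 1 u)^2"
      proof -
        have fe: "(\<lambda>v. (if v = u then q else 0) * (Dl 1 u * Dl 1 v)) = (\<lambda>v. if v = u then q * (Dl 1 u)^2 else 0)"
          by (auto simp: power2_eq_square)
        show ?thesis by (subst fe) simp
      qed
    qed
    also have "\<dots> = q * G 1" unfolding G_def by (simp add: sum_distrib_left)
    finally show ?thesis .
  qed
  have f0: "f 0 = 0" unfolding f_def using s0 by (simp add: power_0_left)
  have Dscale: "D (c * u) (c * x) = f c * D u x" for c u x
    unfolding D_def by (simp add: distrib_left[symmetric] fmult)
  have Dlscale: "Dl (f c) u = Dl 1 (c * u)" if c: "c \<noteq> 0" for c u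
    unfolding Dl_def
    by (rule sum.reindex_bij_witness[of _ "\<lambda>y. y / c" "\<lambda>x. c * x"]) (use c Dscale in auto)
  have Gscale: "G (f c) = G 1" if c: "c \<noteq> 0" for c
  proof -
    have "G (f c) = (\<Sum>u\<in>UNIV. (Dl 1 (c * u))^2)" unfolding G_def using Dlscale[OF c] by simp
    also have "\<dots> = G 1" unfolding G_def
      by (rule sum.reindex_bij_witness[of _ "\<lambda>y. y / c" "\<lambda>x. c * x"]) (use c in auto)
    finally show ?thesis .
  qed
  have Gconst: "G b = G 1" if b: "b \<noteq> 0" for b
  proof -
    obtain c where c: "f c = b" using bijf by (metis bij_pointE)
    then have "c \<noteq> 0" using b f0 by auto
    then show ?thesis using Gscale c by auto
  qed

  have cardU: "int (card (UNIV - {0::'a})) = q - 1"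
    unfolding q_def using finite_UNIV_card_ge_0[where ?'a = 'a] by (simp add: card_Diff_subset of_nat_diff)
  have Dcard: "card {z. D u z = D u x} = (if u = 0 then CARD('a) else 2)" for u x
  proof (cases "u = 0")
    case True
    then have "{z. D u z = D u x} = UNIV" unfolding D_def by (auto simp: aa)
    then show ?thesis using True by simp
  next
    case False
    have "card {z. D u z = D u x} = 0 \<or> card {z. D u z = D u x} = 2"
      using assms(6) False unfolding APN_def two_to_one_def D_def f_def by blast
    moreover have "card {z. D u z = D u x} \<noteq> 0"
      by (subst card_0_eq) auto
    ultimately show ?thesis using False by auto
  qed
  have Gsum: "(\<Sum>b\<in>UNIV. G b) = q^3 + (q - 1) * (2 * q^2)"
  proof -
    have "(\<Sum>b\<in>UNIV. G b) = (\<Sum>b\<in>UNIV. \<Sum>u\<in>UNIV. \<Sum>x\<in>UNIV. \<Sum>z\<in>UNIV. chi (b * (D u x + D u z)))"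
    proof (intro sum.cong[OF refl])
      fix b
      show "G b = (\<Sum>u\<in>UNIV. \<Sum>x\<in>UNIV. \<Sum>z\<in>UNIV. chi (b * (D u x + D u z)))"
        unfolding G_def
      proof (rule sum.cong[OF refl])
        fix u
        show "(Dl b u)^2 = (\<Sum>x\<in>UNIV. \<Sum>z\<in>UNIV. chi (b * (D u x + D u z)))"
          unfolding Dl_def power2_eq_square sum_product by (simp add: distrib_left chiadd)
      qed
    qed
    also have "\<dots> = (\<Sum>u\<in>UNIV. \<Sum>b\<in>UNIV. \<Sum>x\<in>UNIV. \<Sum>z\<in>UNIV. chi (b * (D u x + D u z)))"
      by (rule sum.swap)
    also have "\<dots> = (\<Sum>u\<in>UNIV. \<Sum>x\<in>UNIV. \<Sum>b\<in>UNIV. \<Sum>z\<in>UNIV. chi (b * (D u x + D u z)))"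
      by (rule sum.cong[OF refl], rule sum.swap)
    also have "\<dots> = (\<Sum>u\<in>UNIV. \<Sum>x\<in>UNIV. \<Sum>z\<in>UNIV. \<Sum>b\<in>UNIV. chi (b * (D u x + D u z)))"
      by (rule sum.cong[OF refl], rule sum.cong[OF refl], rule sum.swap)
    also have "\<dots> = (\<Sum>u\<in>UNIV. \<Sum>x\<in>UNIV. \<Sum>z\<in>UNIV. if D u z = D u x then q else 0)"
    proof (intro sum.cong refl)
      fix u x z
      have ceq: "(D u x + D u z = 0) = (D u z = D u x)" using char2_eq_iff[OF ch, of "D u x" "D u z"] by auto
      show "(\<Sum>b\<in>UNIV. chi (b * (D u x + D u z))) = (if D u z = D u x then q else 0)"
        by (simp only: chisum ceq)
    qed
    also have "\<dots> = (\<Sum>u\<in>UNIV. \<Sum>x\<in>UNIV. q * int (card {z. D u z = D u x}))"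
    proof (intro sum.cong refl)
      fix u x
      show "(\<Sum>z\<in>UNIV. if D u z = D u x then q else 0) = q * int (card {z. D u z = D u x})"
        by (simp add: sum.If_cases)
    qed
    also have "\<dots> = (\<Sum>u::'a\<in>UNIV. if u = 0 then q^3 else 2 * q^2)"
      by (rule sum.cong[OF refl]) (simp add: Dcard q_def power2_eq_square power3_eq_cube)
    also have "\<dots> = q^3 + (\<Sum>u::'a\<in>UNIV - {0}. if u = 0 then q^3 else 2 * q^2)"
      by (subst sum.remove[of UNIV 0]) auto
    also have "(\<Sum>u::'a\<in>UNIV - {0}. if u = 0 then q^3 else 2 * q^2) = (\<Sum>u\<in>UNIV - {0::'a}. 2 * q^2)"
      by (intro sum.cong refl) auto
    also have "\<dots> = (q - 1) * (2 * q^2)" using cardU by simp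
    finally show ?thesis .
  qed
  have G0: "G 0 = q^3"
    unfolding G_def Dl_def by (simp add: chi_def chi_0 q_def power2_eq_square power3_eq_cube)
  have G1: "G 1 = 2 * q^2"
  proof -
    have "(\<Sum>b\<in>UNIV. G b) = G 0 + (\<Sum>b\<in>UNIV - {0}. G b)"
      by (subst sum.remove[of UNIV 0]) auto
    also have "(\<Sum>b\<in>UNIV - {0}. G b) = (\<Sum>b\<in>UNIV - {0::'a}. G 1)"
      by (rule sum.cong[OF refl]) (use Gconst in blast)
    also have "\<dots> = (q - 1) * G 1" using cardU by simp
    finally have "q^3 + (q - 1) * (2 * q^2) = q^3 + (q - 1) * G 1" using Gsum G0 by simp
    then have "(q - 1) * G 1 = (q - 1) * (2 * q^2)" by linarith
    moreover have "q - 1 \<noteq> 0" using assms(2) unfolding q_def by simp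
    ultimately show ?thesis by (metis mult_left_cancel)
  qed

  have W0: "W 0 = 0"
  proof -
    have "W 0 = (\<Sum>x\<in>UNIV. chi (f x))" unfolding W_def by simp
    also have "\<dots> = (\<Sum>y\<in>UNIV. chi y)"
      using sum.reindex[of f UNIV chi] bijf by (simp add: bij_def)
    finally show ?thesis using chi_sum0[OF ch assms(2)] unfolding chi_def by simp
  qed
  show ?thesis
  proof (rule ccontr)
    assume "\<not> ?thesis"
    then have nd: "\<not> (5::int) dvd W a" if "a \<noteq> 0" for a
      using that unfolding W_def fourier_coeff_def chi_def f_def by auto
    have tot: "(\<Sum>a\<in>UNIV. (W a)^4) = 2 * q^3"
      using W4 G1 by (simp add: power2_eq_square power3_eq_cube)
    have "(\<Sum>a\<in>UNIV. (W a)^4) = (W 0)^4 + (\<Sum>a\<in>UNIV - {0}. (W a)^4)"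
      by (subst sum.remove[of UNIV 0]) auto
    then have e1: "2 * q^3 = (\<Sum>a\<in>UNIV - {0}. (W a)^4)" using tot W0 by simp
    have "(\<Sum>a\<in>UNIV - {0}. (W a)^4) mod 5 = (\<Sum>a\<in>UNIV - {0}. (W a)^4 mod 5) mod 5"
      by (simp add: mod_sum_eq)
    also have "(\<Sum>a\<in>UNIV - {0}. (W a)^4 mod 5) = (\<Sum>a\<in>UNIV - {0::'a}. 1)"
      by (rule sum.cong[OF refl]) (use fermat5 nd in blast)
    also have "\<dots> = q - 1" using cardU by simp
    finally have "(\<Sum>a\<in>UNIV - {0}. (W a)^4) mod 5 = (q - 1) mod 5" .
    then have "(2 * q^3) mod 5 = (q - 1) mod 5" by (simp only: e1[symmetric])
    then have "(5::int) dvd 2 * q^3 - (q - 1)" by (simp only: mod_eq_dvd_iff)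
    moreover have "2 * q^3 - (q - 1) = 2 * q^3 - q + 1" by simp
    ultimately have "(5::int) dvd 2 * q^3 - q + 1" by simp
    moreover have m5: "q mod 5 = int (CARD('a) mod 5)" unfolding q_def by (simp add: of_nat_mod)
    then have "q mod 5 \<noteq> 2" "q mod 5 \<noteq> 4" using assms(3,4) by auto
    ultimately show False using final5 by blast
  qed
qed


end
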